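(* Let $k\ge1$, $A,B_1,\dots,B_k,C_1,\dots,C_k\in\mathbb{C}^{r\times r}$ with $AB_j=B_jA$, $B_jB_l=B_lB_j$, $C_jC_l=C_lC_j$ for all $j,l$, and $C_j+mI$ invertible for all $m\ge0$ and all $j$. Fix $i$ and $n\ge1$ and suppose $C_i-mI$ is invertible for all $0\le m\le n$. Then $$F_{\mathcal A}[C_i-nI]=F_{\mathcal A}+x_iAB_i\Big[\sum_{n_1=1}^nF_{\mathcal A}[A+I,\,B_i+I,\,C_i+(2-n_1)I]\,(C_i-n_1I)^{-1}(C_i-(n_1-1)I)^{-1}\Big].$$
   Context: For $M\in\mathbb{C}^{r\times r}$: $(M)_0=I$, $(M)_m=M(M+I)\cdots(M+(m-1)I)$, $(M)^{-1}_m=((M)_m)^{-1}$. $$F_{\mathcal A}=F_{\mathcal A}[A,B_1,\dots,B_k;C_1,\dots,C_k;x_1,\dots,x_k]=\sum_{m_1,\dots,m_k\ge0}(A)_{m_1+\cdots+m_k}\prod_{j=1}^k(B_j)_{m_j}\prod_{j=1}^k(C_j)^{-1}_{m_j}\prod_{j=1}^k\frac{x_j^{m_j}}{m_j!},$$ $x_j$ scalar variables, matrix products in order of increasing index; identities are of formal power series in the $x_j$. $F_{\mathcal A}[\dots]$ lists only the shifted parameters, all others unchanged. *)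

theory Defs
  imports "HOL-Analysis.Analysis"
begin

text \<open>Square complex matrices of size r are represented as complex^'r^'r
 (r = CARD('r) arbitrary). Scalar c times identity is mat c.\<close>

type_synonym 'r cmat = "complex^'r^'r"

fun mpoch :: "'r::finite cmat \<Rightarrow> nat \<Rightarrow> 'r cmat" where
  "mpoch M 0 = mat 1"
| "mpoch M (Suc m) = mpoch M m ** (M + mat (of_nat m))"

definition mprod_list :: "'r::finite cmat list \<Rightarrow> 'r cmat" where
  "mprod_list Ms = foldr (**) Ms (mat 1)"

text \<open>Coefficient of x_1^{m 1} ... x_k^{m k} in the Lauricella-type matrix series
  F_A[A,B_1..B_k;C_1..C_k;x_1..x_k]; indices run over 1..k.\<close>
definition FA_coef :: "nat \<Rightarrow> 'r::finite cmat \<Rightarrow> (nat \<Rightarrow> 'r cmat) \<Rightarrow> (nat \<Rightarrow> 'r cmat)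
    \<Rightarrow> (nat \<Rightarrow> nat) \<Rightarrow> 'r cmat" where
  "FA_coef k A B C m =
     (1 / (\<Prod>j=1..k. fact (m j) :: real)) *\<^sub>R
     (mpoch A (\<Sum>j=1..k. m j)
      ** mprod_list (map (\<lambda>j. mpoch (B j) (m j)) [1..<k+1])
      ** mprod_list (map (\<lambda>j. matrix_inv (mpoch (C j) (m j))) [1..<k+1]))"

definition multi_idx :: "nat \<Rightarrow> (nat \<Rightarrow> nat) \<Rightarrow> bool" where
  "multi_idx k m \<longleftrightarrow> (\<forall>j. j \<notin> {1..k} \<longrightarrow> m j = 0)"

end

theory Submission imports Defs begin


type_synonym 'r M = "complex^'r^'r"

lemma mm_add_r: "((A::'r::finite M) + B) ** C = A ** C + B ** C"
  by (vector matrix_matrix_mult_def sum.distrib[symmetric] field_simps)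
lemma mm_diff_l: "(A::'r::finite M) ** (B - C) = A ** B - A ** C"
  by (vector matrix_matrix_mult_def sum_subtractf[symmetric] field_simps)
lemma mm_diff_r: "((A::'r::finite M) - B) ** C = A ** C - B ** C"
  by (vector matrix_matrix_mult_def sum_subtractf[symmetric] field_simps)
lemma mat_add: "mat (a + b) = (mat a + mat b :: 'r::finite M)"
  by (vector mat_def)
lemma mat_diff: "mat (a - b) = (mat a - mat b :: 'r::finite M)"
  by (vector mat_def)
lemma mat_comm: "mat c ** (X::'r::finite M) = X ** mat c"
  unfolding matrix_matrix_mult_def mat_def
  by (simp add: vec_eq_iff if_distrib if_distribR sum.delta'[OF finite] mult.commute cong: if_cong)
lemma scaleR_mm_r: "(X::'r::finite M) ** (k *\<^sub>R Y) = k *\<^sub>R (X ** Y)"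
  by (simp add: matrix_scalar_ac scalar_matrix_assoc)
lemma scaleR_mm_l: "(k *\<^sub>R (X::'r::finite M)) ** Y = k *\<^sub>R (X ** Y)"
  by (simp add: scalar_matrix_assoc)
lemma mm_sum_l: "(X::'r::finite M) ** sum f S = (\<Sum>s\<in>S. X ** f s)"
  by (induction S rule: infinite_finite_induct) (auto simp: matrix_add_ldistrib)

lemma inv_r: "invertible (A::'r::finite M) \<Longrightarrow> A ** matrix_inv A = mat 1"
  unfolding invertible_def matrix_inv_def by (rule someI2_ex) auto
lemma inv_l: "invertible (A::'r::finite M) \<Longrightarrow> matrix_inv A ** A = mat 1"
  unfolding invertible_def matrix_inv_def by (rule someI2_ex) auto
lemma inv_unique: "invertible (A::'r::finite M) \<Longrightarrow> A ** X = mat 1 \<Longrightarrow> matrix_inv A = X"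
  by (metis inv_l matrix_mul_assoc matrix_mul_lid matrix_mul_rid)
lemma inv_mult: "invertible (A::'r::finite M) \<Longrightarrow> invertible (B::'r M) \<Longrightarrow>
   matrix_inv (A ** B) = matrix_inv B ** matrix_inv A"
proof -
  assume a: "invertible A" "invertible B"
  have "A ** B ** (matrix_inv B ** matrix_inv A) = A ** (B ** matrix_inv B) ** matrix_inv A"
    by (simp add: matrix_mul_assoc)
  also have "\<dots> = mat 1" using a inv_r[of A] inv_r[of B] by simp
  finally show ?thesis using a by (intro inv_unique invertible_mult) auto
qed

definition cm :: "'r::finite M \<Rightarrow> 'r M \<Rightarrow> bool" where "cm X Y \<longleftrightarrow> X ** Y = Y ** X"

lemma cm_mult: "cm X Y \<Longrightarrow> cm X Z \<Longrightarrow> cm X (Y ** Z)"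
  unfolding cm_def by (metis matrix_mul_assoc)
lemma cm_add: "cm X Y \<Longrightarrow> cm X Z \<Longrightarrow> cm X (Y + Z)"
  unfolding cm_def by (simp add: matrix_add_ldistrib mm_add_r)
lemma cm_mat: "cm X (mat c)" unfolding cm_def by (simp add: mat_comm)
lemma cm_sym: "cm X Y \<Longrightarrow> cm Y X" unfolding cm_def by simp
lemma cm_refl: "cm X X" unfolding cm_def by simp
lemma cm_mpoch: "cm X Y \<Longrightarrow> cm X (mpoch Y m)"
  by (induction m) (auto simp: cm_mat cm_mult cm_add)
lemma cm_inv: "cm X Y \<Longrightarrow> invertible Y \<Longrightarrow> cm X (matrix_inv Y)"
  unfolding cm_def
proof -
  assume a: "X ** Y = Y ** X" "invertible Y"
  have "matrix_inv Y ** X = matrix_inv Y ** X ** (Y ** matrix_inv Y)" using a by (simp add: inv_r)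
  also have "\<dots> = matrix_inv Y ** (X ** Y) ** matrix_inv Y" by (simp add: matrix_mul_assoc)
  also have "\<dots> = X ** matrix_inv Y" using a by (simp add: matrix_mul_assoc inv_l)
  finally show "X ** matrix_inv Y = matrix_inv Y ** X" by simp
qed
lemma cm_prod: "(\<forall>Y\<in>set Ys. cm X Y) \<Longrightarrow> cm X (mprod_list Ys)"
  by (induction Ys) (auto simp: mprod_list_def cm_mat cm_mult)

lemma mprod_append: "mprod_list (xs @ ys) = mprod_list xs ** (mprod_list ys :: 'r::finite M)"
  by (induction xs) (auto simp: mprod_list_def matrix_mul_assoc)

lemma mprod_Cons: "mprod_list (x # xs) = x ** (mprod_list xs :: 'r::finite M)"
  by (simp add: mprod_list_def)

lemma mpoch_Suc_left: "mpoch (X::'r::finite M) (Suc m) = X ** mpoch (X + mat 1) m"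
proof (induction m)
  case 0 then show ?case by simp
next
  case (Suc m)
  have "mpoch X (Suc (Suc m)) = X ** mpoch (X + mat 1) m ** (X + mat (of_nat (Suc m)))"
    using Suc by simp
  also have "X + mat (of_nat (Suc m)) = X + mat 1 + mat (of_nat m)"
    by (simp add: mat_add add.assoc add.commute)
  finally show ?case by (simp add: matrix_mul_assoc)
qed

lemma mpoch_inv: "(\<forall>j<m. invertible ((X::'r::finite M) + mat (of_nat j))) \<Longrightarrow> invertible (mpoch X m)"
  by (induction m) (auto intro!: invertible_mult simp: less_Suc_eq invertible_def[of "mat 1"] intro: exI[of _ "mat 1"])

lemma mat_scale: "mat (of_nat p) ** (X::'r::finite M) = (of_nat p :: real) *\<^sub>R X"
  unfolding matrix_matrix_mult_def mat_def
  apply (simp add: vec_eq_iff if_distrib if_distribR sum.delta'[OF finite] cong: if_cong)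
  apply (simp add: scaleR_conv_of_real)
  done

lemma shiftD: "(D::'r::finite M) + mat 1 + mat (of_nat j) = D + mat (of_nat (Suc j))"
  by (simp add: mat_add add.assoc add.commute)

lemma poch_diff:
  assumes inv: "\<forall>j. invertible ((D::'r::finite M) + mat (of_nat j))"
  shows "matrix_inv (mpoch D p) - matrix_inv (mpoch (D + mat 1) p)
        = (of_nat p :: real) *\<^sub>R matrix_inv (mpoch D (Suc p))"
proof -
  let ?P = "mpoch (D + mat 1) p"
  have i1: "invertible (mpoch D p)" using inv mpoch_inv by blast
  have i2: "invertible ?P" using inv by (intro mpoch_inv) (auto simp only: shiftD)
  have iQ: "invertible (mpoch D (Suc p))" using inv mpoch_inv by blast
  have cP: "D ** ?P = ?P ** D"
    using cm_mpoch[OF cm_add[OF cm_refl cm_mat], of D 1 p] unfolding cm_def .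
  let ?L = "matrix_inv (mpoch D p) - matrix_inv ?P"
  have "?L ** mpoch D (Suc p) = matrix_inv (mpoch D p) ** (mpoch D p ** (D + mat (of_nat p)))
       - matrix_inv ?P ** (D ** ?P)"
    by (simp add: mm_diff_r mpoch_Suc_left[symmetric])
  also have "\<dots> = (D + mat (of_nat p)) - D"
    using i1 i2 inv_l[OF i1] inv_l[OF i2] by (simp add: cP matrix_mul_assoc)
  also have "\<dots> = mat (of_nat p)" by simp
  finally have e: "?L ** mpoch D (Suc p) = mat (of_nat p)" .
  have "?L = ?L ** mpoch D (Suc p) ** matrix_inv (mpoch D (Suc p))"
    by (metis inv_r[OF iQ] matrix_mul_assoc matrix_mul_rid)
  also have "\<dots> = (of_nat p :: real) *\<^sub>R matrix_inv (mpoch D (Suc p))"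
    by (simp only: e mat_scale)
  finally show ?thesis .
qed

lemma poch_decomp:
  assumes inv: "\<forall>j. invertible ((D::'r::finite M) + mat (of_nat j))"
  shows "matrix_inv (mpoch D (Suc (Suc q))) =
     matrix_inv (mpoch (D + mat 1 + mat 1) q) ** matrix_inv (D + mat 1) ** matrix_inv D"
proof -
  have i0: "invertible D" using inv[rule_format, of 0] by simp
  have i1: "invertible (D + mat 1)" using inv[rule_format, of 1] by simp
  have i2: "invertible (mpoch (D + mat 1 + mat 1) q)"
    using inv by (intro mpoch_inv) (auto simp only: shiftD)
  have "mpoch D (Suc (Suc q)) = D ** ((D + mat 1) ** mpoch (D + mat 1 + mat 1) q)"
    by (simp only: mpoch_Suc_left)
  then show ?thesis using i0 i1 i2
    by (simp add: inv_mult invertible_mult matrix_mul_assoc)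
qed

lemma split_prod:
  assumes "i \<in> {1..k}"
  shows "mprod_list (map f [1..<k+1]) =
     mprod_list (map f [1..<i]) ** (f i :: 'r::finite M) ** mprod_list (map f [Suc i..<k+1])"
proof -
  have "[1..<k+1] = [1..<i] @ [i..<k+1]" using assms
    by (metis atLeastAtMost_iff le_add1 le_add_diff_inverse le_imp_less_Suc less_imp_le_nat Suc_eq_plus1 upt_add_eq_append)
  also have "[i..<k+1] = i # [Suc i..<k+1]" using assms by (simp add: upt_conv_Cons)
  finally show ?thesis by (simp only: mprod_append mprod_Cons map_append list.map matrix_mul_assoc)
qed

definition LBf :: "(nat \<Rightarrow> 'r::finite M) \<Rightarrow> (nat \<Rightarrow> nat) \<Rightarrow> nat list \<Rightarrow> 'r M" where
  "LBf B m xs = mprod_list (map (\<lambda>j. mpoch (B j) (m j)) xs)"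
definition LCf :: "(nat \<Rightarrow> 'r::finite M) \<Rightarrow> (nat \<Rightarrow> nat) \<Rightarrow> nat list \<Rightarrow> 'r M" where
  "LCf C m xs = mprod_list (map (\<lambda>j. matrix_inv (mpoch (C j) (m j))) xs)"

lemma FA_split:
  assumes "i \<in> {1..k}" "\<forall>j. j \<noteq> i \<longrightarrow> B' j = B j \<and> C' j = C j \<and> m' j = m j"
  shows "FA_coef k A' B' C' m' = (1 / (\<Prod>j=1..k. fact (m' j) :: real)) *\<^sub>R
     (mpoch A' (\<Sum>j=1..k. m' j) **
      (LBf B m [1..<i] ** mpoch (B' i) (m' i) ** LBf B m [Suc i..<k+1]) **
      (LCf C m [1..<i] ** matrix_inv (mpoch (C' i) (m' i)) ** LCf C m [Suc i..<k+1]))"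
proof -
  have a: "LBf B' m' [1..<i] = LBf B m [1..<i]" "LBf B' m' [Suc i..<k+1] = LBf B m [Suc i..<k+1]"
     "LCf C' m' [1..<i] = LCf C m [1..<i]" "LCf C' m' [Suc i..<k+1] = LCf C m [Suc i..<k+1]"
    unfolding LBf_def LCf_def using assms(2)
    by (auto intro!: arg_cong[where f=mprod_list] map_cong)
  show ?thesis unfolding FA_coef_def
    using split_prod[OF assms(1), of "\<lambda>j. mpoch (B' j) (m' j)"]
      split_prod[OF assms(1), of "\<lambda>j. matrix_inv (mpoch (C' j) (m' j))"] a
    by (simp add: LBf_def LCf_def)
qed



lemma telescope: "(\<Sum>n1=1..(n::nat). f n1 - f (n1 - 1)) = f n - (f 0 :: 'a::ab_group_add)"
  by (induction n) (auto simp: sum.cl_ivl_Suc)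

lemma hp: "(x::real) > 0 \<Longrightarrow> y \<noteq> 0 \<Longrightarrow> f = y * x \<Longrightarrow> 1/x = y/f" by simp

theorem mainTheorem4:
  fixes k i n :: nat
    and A :: "'r::finite cmat"
    and B C :: "nat \<Rightarrow> 'r cmat"
  assumes "k \<ge> 1"
    and "\<forall>j\<in>{1..k}. A ** B j = B j ** A"
    and "\<forall>j\<in>{1..k}. \<forall>l\<in>{1..k}. B j ** B l = B l ** B j"
    and "\<forall>j\<in>{1..k}. \<forall>l\<in>{1..k}. C j ** C l = C l ** C j"
    and "\<forall>j\<in>{1..k}. \<forall>m::nat. invertible (C j + mat (of_nat m))"
    and "i \<in> {1..k}" and "n \<ge> 1"
    and "\<forall>m::nat. m \<le> n \<longrightarrow> invertible (C i - mat (of_nat m))"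
  shows "\<forall>m. multi_idx k m \<longrightarrow>
    FA_coef k A B (C(i := C i - mat (of_nat n))) m =
      FA_coef k A B C m
      + (if m i \<ge> 1 then
           (A ** B i) **
           (\<Sum>n1=1..n. FA_coef k (A + mat 1) (B(i := B i + mat 1))
                              (C(i := C i + mat (2 - of_nat n1))) (m(i := m i - 1))
                        ** matrix_inv (C i - mat (of_nat n1))
                        ** matrix_inv (C i - mat (of_nat (n1 - 1))))
         else 0)"
proof (intro allI impI)
  fix m assume "multi_idx k m"
  note hi = assms(6)
  show "FA_coef k A B (C(i := C i - mat (of_nat n))) m =
      FA_coef k A B C m
      + (if m i \<ge> 1 then
           (A ** B i) **
           (\<Sum>n1=1..n. FA_coef k (A + mat 1) (B(i := B i + mat 1))
                              (C(i := C i + mat (2 - of_nat n1))) (m(i := m i - 1))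
                        ** matrix_inv (C i - mat (of_nat n1))
                        ** matrix_inv (C i - mat (of_nat (n1 - 1))))
         else 0)"
  proof (cases "m i \<ge> 1")
    case False
    then have mi0: "m i = 0" by simp
    have "map (\<lambda>j. matrix_inv (mpoch ((C(i := C i - mat (of_nat n))) j) (m j))) [1..<k+1]
        = map (\<lambda>j. matrix_inv (mpoch (C j) (m j))) [1..<k+1]"
      by (rule map_cong) (auto simp: mi0)
    note mapeq = this
    have "FA_coef k A B (C(i := C i - mat (of_nat n))) m = FA_coef k A B C m"
      unfolding FA_coef_def by (simp only: mapeq)
    then show ?thesis using False by simp
  next
    case True
    define p where "p = m i"
    define q where "q = p - 1"
    have pq: "p = Suc q" using True by (simp add: p_def q_def)
    define m' where "m' = m(i := m i - 1)"
    have m'i: "m' i = q" by (simp add: m'_def q_def p_def)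
    have m'o: "\<forall>j. j \<noteq> i \<longrightarrow> m' j = m j" by (simp add: m'_def)
    define S where "S = (\<Sum>j=1..k. m j)"
    define fac where "fac = (\<Prod>j=1..k. fact (m j) :: real)"
    define LB where "LB = LBf B m [1..<i]"
    define RB where "RB = LBf B m [Suc i..<k+1]"
    define LC where "LC = LCf C m [1..<i]"
    define RC where "RC = LCf C m [Suc i..<k+1]"
    define T where "T s = FA_coef k A B (C(i := C i - mat (of_nat s))) m" for s
    define Gt where "Gt n1 = FA_coef k (A + mat 1) (B(i := B i + mat 1))
                              (C(i := C i + mat (2 - of_nat n1))) (m(i := m i - 1))
                        ** matrix_inv (C i - mat (of_nat n1))
                        ** matrix_inv (C i - mat (of_nat (n1 - 1)))" for n1
    have fin: "finite {1..k}" by simp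
    have Ssplit: "S = p + (\<Sum>j\<in>{1..k}-{i}. m j)"
      unfolding S_def p_def using sum.remove[OF fin hi] by simp
    have S'split: "(\<Sum>j=1..k. m' j) = q + (\<Sum>j\<in>{1..k}-{i}. m j)"
      using sum.remove[OF fin hi, of m'] by (simp add: m'_def q_def p_def)
    have S': "(\<Sum>j=1..k. m' j) = S - 1" using Ssplit S'split pq by simp
    have S1: "S = Suc (S - 1)" using Ssplit pq by simp
    have facsplit: "fac = fact p * (\<Prod>j\<in>{1..k}-{i}. fact (m j))"
      unfolding fac_def p_def using prod.remove[OF fin hi] by simp
    have fac'split: "(\<Prod>j=1..k. fact (m' j) :: real) = fact q * (\<Prod>j\<in>{1..k}-{i}. fact (m j))"
      using prod.remove[OF fin hi, of "\<lambda>j. fact (m' j) :: real"] by (simp add: m'_def q_def p_def)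
    have facpos: "(\<Prod>j\<in>{1..k}-{i}. fact (m j) :: real) > 0" by (intro prod_pos) auto
    have fac': "1 / (\<Prod>j=1..k. fact (m' j) :: real) = real p / fac"
    proof -
      have fq: "(fact q :: real) * (\<Prod>j\<in>{1..k}-{i}. fact (m j)) > 0" using facpos by simp
      have "fac = real p * ((fact q :: real) * (\<Prod>j\<in>{1..k}-{i}. fact (m j)))"
        unfolding facsplit pq by (simp add: fact_Suc)
      moreover have "real p \<noteq> 0" using pq by simp
      ultimately show ?thesis unfolding fac'split using fq by (simp only: hp)
    qed
    have Tform: "T s = (1/fac) *\<^sub>R (mpoch A S ** (LB ** mpoch (B i) p ** RB) **
          (LC ** matrix_inv (mpoch (C i - mat (of_nat s)) p) ** RC))" for s
      unfolding T_def S_def fac_def LB_def RB_def LC_def RC_def p_def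
      using FA_split[OF hi, of B B "C(i := C i - mat (of_nat s))" C m m A] by simp
    have Gform: "FA_coef k (A + mat 1) (B(i := B i + mat 1)) (C(i := C i + mat (2 - of_nat n1))) m'
       = (real p / fac) *\<^sub>R (mpoch (A + mat 1) (S - 1) ** (LB ** mpoch (B i + mat 1) q ** RB) **
          (LC ** matrix_inv (mpoch (C i + mat (2 - of_nat n1)) q) ** RC))" for n1
      using FA_split[OF hi, of "B(i := B i + mat 1)" B "C(i := C i + mat (2 - of_nat n1))" C m' m "A + mat 1"]
      unfolding LB_def RB_def LC_def RC_def S'[symmetric] fac'[symmetric]
      using m'i m'o by simp
    have comm_hyps: "\<forall>j\<in>{1..k}. cm (B i) (B j)" "cm (B i) A" "\<forall>j\<in>{1..k}. cm (C i) (C j)"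
      using assms(2,3,4) hi unfolding cm_def by auto
    have invC: "invertible (C i + mat (of_int t))" if "t \<ge> - int n" for t
    proof (cases "t \<ge> 0")
      case True
      then have "C i + mat (of_int t) = C i + mat (of_nat (nat t))" by simp
      then show ?thesis using assms(5) hi by simp
    next
      case False
      then have "C i + mat (of_int t) = C i - mat (of_nat (nat (-t)))"
        by (simp add: mat_diff[of 0, simplified])
      moreover have "nat (-t) \<le> n" using that by simp
      ultimately show ?thesis using assms(8) by simp
    qed
    have key: "(A ** B i) ** Gt n1 = T n1 - T (n1 - 1)" if n1: "n1 \<in> {1..n}" for n1
    proof -
      define D where "D = C i - mat (of_nat n1)"
      have Dinv: "\<forall>j. invertible (D + mat (of_nat j))"
      proof
        fix j
        have "D + mat (of_nat j) = C i + mat (of_int (int j - int n1))"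
          unfolding D_def by (simp add: mat_diff mat_add algebra_simps)
        moreover have "invertible (C i + mat (of_int (int j - int n1)))" using invC[of "int j - int n1"] n1 by simp
        ultimately show "invertible (D + mat (of_nat j))" by simp
      qed
      have e1: "C i - mat (of_nat (n1 - 1)) = D + mat 1"
        using n1 unfolding D_def by (simp add: of_nat_diff mat_diff algebra_simps)
      have e2: "C i + mat (2 - of_nat n1) = D + mat 1 + mat 1"
        unfolding D_def by (simp add: mat_diff mat_add[symmetric] algebra_simps)
      define XB where "XB = mpoch (B i) p"
      define YB where "YB = mpoch (B i + mat 1) q"
      define PA where "PA = mpoch A S"
      define PA' where "PA' = mpoch (A + mat 1) (S - 1)"
      define Yc where "Yc = matrix_inv (mpoch (D + mat 1 + mat 1) q)"
      define iD where "iD = matrix_inv D"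
      define iD1 where "iD1 = matrix_inv (D + mat 1)"
      have iDi: "invertible D" "invertible (D + mat 1)"
        using Dinv[rule_format, of 0] Dinv[rule_format, of 1] by auto
      have diffT: "T n1 - T (n1 - 1) = (1/fac) *\<^sub>R (PA ** (LB ** XB ** RB) **
            (LC ** (real p *\<^sub>R (Yc ** iD1 ** iD)) ** RC))"
      proof -
        have "T n1 - T (n1 - 1) = (1/fac) *\<^sub>R (PA ** (LB ** XB ** RB) **
            (LC ** (matrix_inv (mpoch D p) - matrix_inv (mpoch (D + mat 1) p)) ** RC))"
          unfolding Tform e1 by (simp add: D_def PA_def XB_def mm_diff_l mm_diff_r scaleR_diff_right)
        also have "matrix_inv (mpoch D p) - matrix_inv (mpoch (D + mat 1) p) = real p *\<^sub>R (Yc ** iD1 ** iD)"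
          unfolding poch_diff[OF Dinv] pq poch_decomp[OF Dinv] Yc_def iD1_def iD_def ..
        finally show ?thesis .
      qed
      have g0: "Gt n1 = FA_coef k (A + mat 1) (B(i := B i + mat 1)) (C(i := C i + mat (2 - of_nat n1))) m'
           ** matrix_inv (C i - mat (of_nat n1)) ** matrix_inv (C i - mat (of_nat (n1 - 1)))"
        unfolding Gt_def m'_def ..
      have g1: "Gt n1 = (real p / fac) *\<^sub>R (PA' ** (LB ** YB ** RB) ** (LC ** Yc ** RC)) ** iD ** iD1"
        unfolding g0 Gform unfolding e1 e2 PA'_def YB_def Yc_def iD_def iD1_def D_def[symmetric] ..
      have Gt: "(A ** B i) ** Gt n1 = (real p / fac) *\<^sub>R (A ** B i ** PA' ** (LB ** YB ** RB) **
            (LC ** Yc ** RC ** iD ** iD1))"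
        unfolding g1 by (simp add: scaleR_mm_l scaleR_mm_r matrix_mul_assoc)
      have cA: "B i ** PA' = PA' ** B i"
        unfolding PA'_def using cm_mpoch[OF cm_add[OF comm_hyps(2) cm_mat]] cm_def by blast
      have cL: "B i ** LB = LB ** B i"
        unfolding LB_def LBf_def using comm_hyps(1) hi
        by (subst cm_def[symmetric], intro cm_prod) (auto intro!: cm_mpoch)
      have cD: "cm D (C j)" if "j \<in> {1..k}" for j
        unfolding D_def cm_def using comm_hyps(3) that
        by (simp add: mm_diff_l mm_diff_r mat_comm cm_def)
      have cD1: "cm (D + mat 1) (C j)" if "j \<in> {1..k}" for j
        using cD[OF that] by (simp add: cm_def mm_add_r matrix_add_ldistrib mat_comm)
      have invPj: "invertible (mpoch (C j) (m j))" if "j \<in> {1..k}" for j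
        using assms(5) that by (intro mpoch_inv) auto
      have cW: "cm (iD ** iD1) (matrix_inv (mpoch (C j) (m j)))" if "j \<in> {1..k}" for j
      proof -
        have "cm (matrix_inv (mpoch (C j) (m j))) iD"
          unfolding iD_def
          by (rule cm_inv[OF cm_sym[OF cm_inv[OF cm_mpoch[OF cD[OF that]] invPj[OF that]]] iDi(1)])
        moreover have "cm (matrix_inv (mpoch (C j) (m j))) iD1"
          unfolding iD1_def
          by (rule cm_inv[OF cm_sym[OF cm_inv[OF cm_mpoch[OF cD1[OF that]] invPj[OF that]]] iDi(2)])
        ultimately show ?thesis by (intro cm_sym[OF cm_mult])
      qed
      have "cm (iD ** iD1) RC"
        unfolding RC_def LCf_def using cW hi by (intro cm_prod) auto
      then have cR: "RC ** (iD ** iD1) = (iD ** iD1) ** RC" by (simp add: cm_def)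
      have cDD: "iD ** iD1 = iD1 ** iD"
      proof -
        have "cm (D + mat 1) D" by (rule cm_sym[OF cm_add[OF cm_refl cm_mat]])
        then have "cm iD iD1" unfolding iD_def iD1_def
          by (rule cm_inv[OF cm_sym[OF cm_inv[OF _ iDi(1)]] iDi(2)])
        then show ?thesis by (simp add: cm_def)
      qed
      have hA: "A ** PA' = PA" unfolding PA_def PA'_def
        by (subst S1) (simp only: mpoch_Suc_left)
      have hB: "B i ** YB = XB" unfolding XB_def YB_def pq by (simp only: mpoch_Suc_left)
      have P1: "A ** B i ** PA' ** (LB ** YB ** RB) = PA ** (LB ** XB ** RB)"
      proof -
        have "A ** B i ** PA' ** (LB ** YB ** RB) = A ** (B i ** PA') ** (LB ** YB ** RB)"
          by (simp add: matrix_mul_assoc)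
        also have "\<dots> = (A ** PA') ** ((B i ** LB) ** YB ** RB)"
          by (simp add: cA matrix_mul_assoc)
        also have "\<dots> = PA ** (LB ** (B i ** YB) ** RB)"
          by (simp add: cL hA matrix_mul_assoc)
        finally show ?thesis by (simp add: hB)
      qed
      have P2: "LC ** Yc ** RC ** iD ** iD1 = LC ** (Yc ** iD1 ** iD) ** RC"
      proof -
        have "LC ** Yc ** RC ** iD ** iD1 = LC ** Yc ** (RC ** (iD ** iD1))"
          by (simp add: matrix_mul_assoc)
        also have "\<dots> = LC ** Yc ** ((iD1 ** iD) ** RC)"
          by (subst cR, subst cDD, rule refl)
        also have "\<dots> = LC ** (Yc ** (iD1 ** iD)) ** RC"
          by (simp add: matrix_mul_assoc)
        finally show ?thesis by (simp add: matrix_mul_assoc)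
      qed
      show ?thesis unfolding Gt diffT P1 P2
        by (simp add: scaleR_mm_l scaleR_mm_r)
    qed
    have "(A ** B i) ** (\<Sum>n1=1..n. Gt n1) = (\<Sum>n1=1..n. T n1 - T (n1 - 1))"
      by (simp add: mm_sum_l key)
    also have "\<dots> = T n - T 0" by (rule telescope)
    finally have "(A ** B i) ** (\<Sum>n1=1..n. Gt n1) = T n - T 0" .
    moreover have "T 0 = FA_coef k A B C m" by (simp add: T_def)
    ultimately show ?thesis using True unfolding Gt_def T_def by simp
  qed
qed

end
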